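(* Let $n\ge 1$, $k\ge 2$, $\mathcal{K}$ a set of size $k$, $\epsilon\ge 0$ and $p=e^\epsilon/(k-1+e^\epsilon)$. Then, as matrices indexed by $\mathcal{K}^n\times\mathcal{Z}$, $\mathbf{N}\mathbf{S}^r=\mathbf{S}^r\mathbf{N}^r$.
   Context: A dataset is $x\in\mathcal{K}^n$; its histogram $h(x)$ is the map $\kappa\mapsto|\{i:x_i=\kappa\}|$; $\mathcal{Z}$ is the set of all histograms (maps $\mathcal{K}\to\mathbb{N}$ with values summing to $n$) and $\#z$ is the number of datasets with histogram $z$. The full $k$-RR channel $\mathbf{N}:\mathcal{K}^n\to\mathcal{K}^n$ has $\mathbf{N}_{x,y}=\prod_{i=0}^{n-1}q(y_i\mid x_i)$ with $q(b\mid a)=p$ if $b=a$ and $(1-p)/(k-1)$ otherwise. The reduced shuffle channel $\mathbf{S}^r:\mathcal{K}^n\to\mathcal{Z}$ has $\mathbf{S}^r_{x,z}=1$ if $h(x)=z$, else $0$. The reduced $k$-RR channel $\mathbf{N}^r:\mathcal{Z}\to\mathcal{Z}$ is $\mathbf{N}^r_{z',z}=\frac{1}{\#z'}\sum_{x'\in\mathcal{K}^n:\,h(x')=z'}\ \sum_{y\in\mathcal{K}^n:\,h(y)=z}\mathbf{N}_{x',y}$. Products are ordinary matrix products. *)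

theory Defs
  imports Complex_Main "HOL-Library.Cardinality"
begin

text \<open>The alphabet K is a finite type 'k; k = CARD('k).
  Datasets in K^n are lists of length n; histograms are maps 'k => nat summing to n.\<close>

definition datasets :: "nat \<Rightarrow> 'k list set" where
  "datasets n = {x. length x = n}"

definition hist :: "'k list \<Rightarrow> ('k \<Rightarrow> nat)" where
  "hist x = (\<lambda>\<kappa>. card {i. i < length x \<and> x ! i = \<kappa>})"

definition histograms :: "nat \<Rightarrow> ('k::finite \<Rightarrow> nat) set" where
  "histograms n = {z. (\<Sum>\<kappa>\<in>UNIV. z \<kappa>) = n}"

definition num_hist :: "nat \<Rightarrow> ('k \<Rightarrow> nat) \<Rightarrow> nat" where
  "num_hist n z = card {x \<in> datasets n. hist x = z}"

definition krr_q :: "real \<Rightarrow> 'k::finite \<Rightarrow> 'k \<Rightarrow> real" where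
  "krr_q p a b = (if b = a then p else (1 - p) / (real CARD('k) - 1))"

definition krr_N :: "nat \<Rightarrow> real \<Rightarrow> 'k::finite list \<Rightarrow> 'k list \<Rightarrow> real" where
  "krr_N n p x y = (\<Prod>i<n. krr_q p (x ! i) (y ! i))"

definition shuffle_Sr :: "'k list \<Rightarrow> ('k \<Rightarrow> nat) \<Rightarrow> real" where
  "shuffle_Sr x z = (if hist x = z then 1 else 0)"

definition krr_Nr :: "nat \<Rightarrow> real \<Rightarrow> ('k::finite \<Rightarrow> nat) \<Rightarrow> ('k \<Rightarrow> nat) \<Rightarrow> real" where
  "krr_Nr n p z' z = (1 / real (num_hist n z')) *
     (\<Sum>x'\<in>{x'\<in>datasets n. hist x' = z'}. \<Sum>y\<in>{y\<in>datasets n. hist y = z}. krr_N n p x' y)"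

end

theory Submission
  imports Defs "HOL-Combinatorics.Permutations" "HOL-Library.FuncSet"
begin

lemma hist_count: "hist x = count (mset x)"
  by (rule ext) (simp add: hist_def count_mset count_list_eq_length_filter length_filter_conv_card eq_commute)

lemma hist_in_histograms:
  fixes x :: "'k::finite list"
  assumes "length x = n"
  shows "hist x \<in> histograms n"
proof -
  have "(\<Sum>\<kappa>\<in>UNIV. card {i. i < length x \<and> x ! i = \<kappa>}) = card (\<Union>\<kappa>\<in>UNIV. {i. i < length x \<and> x ! i = \<kappa>})"
    by (rule card_UN_disjoint[symmetric]) auto
  also have "(\<Union>\<kappa>\<in>UNIV. {i. i < length x \<and> x ! i = \<kappa>}) = {..<length x}" by auto
  finally show ?thesis using assms by (simp add: histograms_def hist_def)
qed

lemma finite_histograms: "finite (histograms n :: ('k::finite \<Rightarrow> nat) set)"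
proof -
  have "histograms n \<subseteq> (Pi\<^sub>E UNIV (\<lambda>_::'k. {..n}))"
  proof
    fix z :: "'k \<Rightarrow> nat" assume "z \<in> histograms n"
    then have s: "(\<Sum>\<kappa>\<in>UNIV. z \<kappa>) = n" by (simp add: histograms_def)
    have "z \<kappa> \<le> n" for \<kappa>
      using member_le_sum[of \<kappa> UNIV z] s by simp
    then show "z \<in> Pi\<^sub>E UNIV (\<lambda>_. {..n})" by (simp add: PiE_UNIV_domain)
  qed
  moreover have "finite (Pi\<^sub>E UNIV (\<lambda>_::'k. {..n}))" by (rule finite_PiE) auto
  ultimately show ?thesis using finite_subset by blast
qed

lemma finite_datasets: "finite (datasets n :: 'k::finite list set)"
proof -
  have "datasets n = {xs :: 'k list. set xs \<subseteq> UNIV \<and> length xs = n}" by (simp add: datasets_def)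
  then show ?thesis using finite_lists_length_eq[of "UNIV :: 'k set" n] by simp
qed

lemma perm_inv:
  assumes "\<sigma> permutes {..<length y}"
  shows "permute_list \<sigma> (permute_list (inv \<sigma>) y) = y"
proof -
  have "permute_list (inv \<sigma> \<circ> \<sigma>) y = permute_list \<sigma> (permute_list (inv \<sigma>) y)"
    by (rule permute_list_compose) (simp add: assms)
  moreover have "inv \<sigma> \<circ> \<sigma> = id" using assms permutes_inv_o(2) by blast
  ultimately show ?thesis by simp
qed

lemma perm_inv2:
  assumes "\<sigma> permutes {..<length y}"
  shows "permute_list (inv \<sigma>) (permute_list \<sigma> y) = y"
proof -
  have "permute_list (\<sigma> \<circ> inv \<sigma>) y = permute_list (inv \<sigma>) (permute_list \<sigma> y)"
    by (rule permute_list_compose) (simp add: assms permutes_inv)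
  moreover have "\<sigma> \<circ> inv \<sigma> = id" using assms permutes_inv_o(1) by blast
  ultimately show ?thesis by simp
qed

lemma krrN_perm:
  assumes "\<sigma> permutes {..<n}" "length x = n" "length y = n"
  shows "krr_N n p x (permute_list (inv \<sigma>) y) = krr_N n p (permute_list \<sigma> x) y"
proof -
  have inv: "inv \<sigma> permutes {..<n}" using assms(1) by (rule permutes_inv)
  have "krr_N n p x (permute_list (inv \<sigma>) y) = (\<Prod>i<n. krr_q p (x ! i) (permute_list (inv \<sigma>) y ! i))"
    by (simp add: krr_N_def)
  also have "\<dots> = (\<Prod>k<n. krr_q p (x ! \<sigma> k) (permute_list (inv \<sigma>) y ! \<sigma> k))"
    using prod.permute[OF assms(1), of "\<lambda>i. krr_q p (x ! i) (permute_list (inv \<sigma>) y ! i)"]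
    by (simp add: comp_def)
  also have "\<dots> = (\<Prod>k<n. krr_q p (permute_list \<sigma> x ! k) (y ! k))"
  proof (rule prod.cong[OF refl])
    fix k assume k: "k \<in> {..<n}"
    have sk: "\<sigma> k < n" using permutes_in_image[OF assms(1)] k by auto
    have "permute_list (inv \<sigma>) y ! \<sigma> k = y ! inv \<sigma> (\<sigma> k)"
      using permute_list_nth[of "inv \<sigma>" y "\<sigma> k"] inv sk assms(3) by simp
    also have "inv \<sigma> (\<sigma> k) = k" using permutes_inverses(2)[OF assms(1)] by simp
    finally show "krr_q p (x ! \<sigma> k) (permute_list (inv \<sigma>) y ! \<sigma> k) = krr_q p (permute_list \<sigma> x ! k) (y ! k)"
      using permute_list_nth[of \<sigma> x k] assms k by simp
  qed
  finally show ?thesis by (simp add: krr_N_def)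
qed

lemma class_sum_invariant:
  fixes x x' :: "'k::finite list"
  assumes "length x = n" "hist x' = hist x" "length x' = n"
  shows "(\<Sum>y\<in>{y\<in>datasets n. hist y = z}. krr_N n p x' y) = (\<Sum>y\<in>{y\<in>datasets n. hist y = z}. krr_N n p x y)"
proof -
  have "mset x' = mset x" using assms(2) by (metis hist_count multiset_eqI)
  then obtain \<sigma> where s: "\<sigma> permutes {..<length x}" "permute_list \<sigma> x = x'"
    by (rule mset_eq_permutation)
  have sn: "\<sigma> permutes {..<n}" using s assms by simp
  have inv: "inv \<sigma> permutes {..<n}" using sn by (rule permutes_inv)
  let ?S = "{y\<in>datasets n. hist y = z}"
  have "(\<Sum>y\<in>?S. krr_N n p (permute_list \<sigma> x) y) = (\<Sum>y\<in>?S. krr_N n p x y)"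
  proof (rule sum.reindex_bij_witness[of _ "permute_list \<sigma>" "permute_list (inv \<sigma>)"])
    fix a assume a: "a \<in> ?S"
    then have la: "length a = n" by (simp add: datasets_def)
    show "permute_list \<sigma> (permute_list (inv \<sigma>) a) = a" using perm_inv[of \<sigma> a] sn la by simp
    show "permute_list (inv \<sigma>) a \<in> ?S" using a la inv by (simp add: datasets_def hist_count)
    show "krr_N n p x (permute_list (inv \<sigma>) a) = krr_N n p (permute_list \<sigma> x) a"
      using krrN_perm[OF sn assms(1) la] .
  next
    fix b assume b: "b \<in> ?S"
    then have lb: "length b = n" by (simp add: datasets_def)
    show "permute_list (inv \<sigma>) (permute_list \<sigma> b) = b" using perm_inv2[of \<sigma> b] sn lb by simp
    show "permute_list \<sigma> b \<in> ?S" using b lb sn by (simp add: datasets_def hist_count)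
  qed
  then show ?thesis using s by simp
qed

theorem mainTheorem4:
  fixes n :: nat and \<epsilon> p :: real
  assumes "n \<ge> 1"
    and "CARD('k::finite) \<ge> 2"
    and "\<epsilon> \<ge> 0"
    and "p = exp \<epsilon> / (real CARD('k) - 1 + exp \<epsilon>)"
  shows "\<forall>x \<in> (datasets n :: 'k list set). \<forall>z \<in> histograms n.
     (\<Sum>y\<in>datasets n. krr_N n p x y * shuffle_Sr y z)
     = (\<Sum>z'\<in>histograms n. shuffle_Sr x z' * krr_Nr n p z' z)"
proof (intro ballI)
  fix x :: "'k list" and z :: "'k \<Rightarrow> nat"
  assume x: "x \<in> datasets n" and z: "z \<in> histograms n"
  have lx: "length x = n" using x by (simp add: datasets_def)
  let ?C = "{x'\<in>datasets n. hist x' = hist x}"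
  let ?S = "{y\<in>datasets n. hist y = z}"
  let ?f = "\<lambda>x'. \<Sum>y\<in>?S. krr_N n p x' y"
  have lhs: "(\<Sum>y\<in>datasets n. krr_N n p x y * shuffle_Sr y z) = ?f x"
    by (simp add: shuffle_Sr_def sum.inter_filter[OF finite_datasets, symmetric] if_distrib cong: if_cong)
  have rhs: "(\<Sum>z'\<in>histograms n. shuffle_Sr x z' * krr_Nr n p z' z) = krr_Nr n p (hist x) z"
  proof -
    have "(\<Sum>z'\<in>histograms n. shuffle_Sr x z' * krr_Nr n p z' z) = (\<Sum>z'\<in>histograms n. if hist x = z' then krr_Nr n p z' z else 0)"
      by (rule sum.cong) (auto simp: shuffle_Sr_def)
    also have "\<dots> = krr_Nr n p (hist x) z"
      using hist_in_histograms[OF lx] finite_histograms[of n] by (subst sum.delta') auto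
    finally show ?thesis .
  qed
  have fin: "finite ?C" by (rule finite_subset[OF _ finite_datasets]) auto
  have ne: "card ?C > 0" using fin x by (auto simp: card_gt_0_iff)
  have "(\<Sum>x'\<in>?C. ?f x') = (\<Sum>x'\<in>?C. ?f x)"
    by (rule sum.cong[OF refl], rule class_sum_invariant) (use lx in \<open>auto simp: datasets_def\<close>)
  also have "\<dots> = real (card ?C) * ?f x" by simp
  finally have "krr_Nr n p (hist x) z = ?f x"
    using ne by (simp add: krr_Nr_def num_hist_def)
  then show "(\<Sum>y\<in>datasets n. krr_N n p x y * shuffle_Sr y z)
     = (\<Sum>z'\<in>histograms n. shuffle_Sr x z' * krr_Nr n p z' z)"
    using lhs rhs by simp
qed

end
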